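(* Let $\alpha(\ell)$ be the first-order formula in the language of rings $$\alpha(\ell):\ \ \neg\,\mathrm{C}(\ell)\ \wedge\ \forall f\,\exists q\,\big(\mathrm{C}(f-q\ell)\big),$$ where $\mathrm{C}(t)$ abbreviates the formula "$t=0\ \vee\ \exists u\,(tu=1)$". Then for every field $R$, the formula $\alpha$ defines in the ring $R[x]$ ($x$ a single indeterminate) exactly the set $L$ of polynomials of degree $1$. Moreover, for every field $R$ and every $\ell\in L\subseteq R[x]$ we have $\operatorname{POW}(\ell)=\operatorname{LPOW}(\ell)$. In particular, since $\operatorname{LPOW}(\ell)$ is defined by a fixed formula with parameter $\ell$, the sets $\operatorname{POW}(\ell)$, $\ell\in L$, are uniformly definable with parameter $\ell$ across all univariate polynomial rings over fields (of any characteristic).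
   Context: All rings are commutative and unital; $S^{*}$ denotes the units of $S$. For $\ell\in S$: $\operatorname{POW}(\ell)=\{\ell^n:n\ge1\}$; $\operatorname{LPOW}(\ell)$ is the set of $f\in S$ such that $\ell\mid f$, $(\ell-1)\mid(f-1)$, and every divisor of $f$ is a unit or a multiple of $\ell$. For a field $R$ and indeterminate $x$, $L\subseteq R[x]$ denotes the set of polynomials of degree exactly $1$. A family of sets is uniformly definable over a class of rings if a single first-order formula of the language of rings defines the corresponding set in every ring of the class. *)

theory Defs
  imports "HOL-Computational_Algebra.Polynomial"
begin

definition C_fml :: "'a::comm_ring_1 \<Rightarrow> bool" where
  "C_fml t \<longleftrightarrow> t = 0 \<or> (\<exists>u. t * u = 1)"

definition alpha_fml :: "'a::comm_ring_1 \<Rightarrow> bool" where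
  "alpha_fml l \<longleftrightarrow> \<not> C_fml l \<and> (\<forall>f. \<exists>q. C_fml (f - q * l))"

definition POW :: "'a::comm_ring_1 \<Rightarrow> 'a set" where
  "POW l = {l ^ n | n. n \<ge> 1}"

definition LPOW :: "'a::comm_ring_1 \<Rightarrow> 'a set" where
  "LPOW l = {f. l dvd f \<and> (l - 1) dvd (f - 1) \<and> (\<forall>d. d dvd f \<longrightarrow> d dvd 1 \<or> l dvd d)}"

definition Lset :: "'a::zero poly set" where
  "Lset = {p. degree p = 1}"

end

theory Submission
  imports Defs "HOL-Computational_Algebra.Polynomial_Factorial"
begin

lemma C_iff: "C_fml (t :: 'a::field poly) \<longleftrightarrow> degree t = 0"
proof
  assume "C_fml t"
  then show "degree t = 0" unfolding C_fml_def
    by (metis degree_0 dvdI is_unit_iff_degree)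
next
  assume "degree t = 0"
  then show "C_fml t" unfolding C_fml_def
    by (metis dvdE is_unit_iff_degree)
qed

lemma deg1_prime:
  assumes "degree (l :: 'a::field poly) = 1"
  shows "prime_elem l"
proof -
  have "l = [:coeff l 0, coeff l 1:]"
    using assms by (auto simp: poly_eq_iff coeff_pCons split: nat.split intro!: coeff_eq_0)
  moreover have "coeff l 1 \<noteq> 0" using assms
  proof -
    have "l \<noteq> 0" using assms by auto
    then have "lead_coeff l \<noteq> 0" by simp
    then show ?thesis using assms by simp
  qed
  ultimately show ?thesis by (metis prime_elem_linear_field_poly)
qed

lemma alpha_iff: "alpha_fml (l :: 'a::field poly) \<longleftrightarrow> degree l = 1"
proof
  assume a: "alpha_fml l"
  then have d0: "degree l \<noteq> 0" unfolding alpha_fml_def by (simp add: C_iff)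
  show "degree l = 1"
  proof (rule ccontr)
    assume "degree l \<noteq> 1"
    with d0 have d2: "degree l \<ge> 2" by auto
    from a obtain q where q: "degree ([:0,1:] - q * l) = 0"
      unfolding alpha_fml_def C_iff by blast
    show False
    proof (cases "q = 0")
      case True then show False using q by simp
    next
      case False
      then have "l \<noteq> 0" using d0 by auto
      then have "degree (q * l) = degree q + degree l" using False by (simp add: degree_mult_eq)
      then have g: "degree (- (q*l)) \<ge> 2" using d2 by simp
      have "degree ([:0,1::'a:]) < degree (- (q*l))" using g by simp
      then have "degree ([:0,1:] + - (q*l)) = degree (- (q*l))" by (rule degree_add_eq_right)
      then show False using q g by simp
    qed
  qed
next
  assume d: "degree l = 1"
  then have l0: "l \<noteq> 0" by auto
  have "\<not> C_fml l" using d by (simp add: C_iff)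
  moreover have "\<forall>f. \<exists>q. C_fml (f - q * l)"
  proof
    fix f
    have e: "f - (f div l) * l = f mod l" by (metis add_diff_cancel_left' div_mult_mod_eq)
    have "degree (f mod l) = 0" using degree_mod_less[OF l0, of f] d by auto
    then have "C_fml (f - (f div l) * l)" using e by (simp add: C_iff)
    then show "\<exists>q. C_fml (f - q * l)" by blast
  qed
  ultimately show "alpha_fml l" unfolding alpha_fml_def by blast
qed

lemma divs_pow:
  assumes "degree (l :: 'a::field poly) = 1"
  shows "d dvd l ^ n \<Longrightarrow> d dvd 1 \<or> l dvd d"
proof (induction n arbitrary: d)
  case 0
  then show ?case by simp
next
  case (Suc n)
  have p: "prime_elem l" using deg1_prime[OF assms] .
  have l0: "l \<noteq> 0" using assms by auto
  from Suc.prems obtain e where e0: "l ^ Suc n = d * e" by (rule dvdE)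
  have e: "l * l ^ n = d * e" using e0 by (simp only: power_Suc)
  have "l dvd l * l ^ n" by (rule dvd_triv_left)
  then have "l dvd d * e" by (simp only: e)
  then have "l dvd d \<or> l dvd e" using p by (rule prime_elem_dvd_multD[rotated])
  then show ?case
  proof
    assume "l dvd e"
    then obtain e' where e': "e = l * e'" by (rule dvdE)
    have "l * l ^ n = l * (d * e')" using e e' by (simp only: mult.left_commute)
    then have "l ^ n = d * e'" by (rule mult_left_cancel[THEN iffD1, OF l0])
    then have "d dvd l ^ n" by (rule dvdI)
    then show ?case by (rule Suc.IH)
  qed simp
qed

lemma struct:
  assumes "degree (l :: 'a::field poly) = 1"
  shows "f \<noteq> 0 \<Longrightarrow> (\<forall>d. d dvd f \<longrightarrow> d dvd 1 \<or> l dvd d) \<Longrightarrow> \<exists>c n. f = smult c (l ^ n)"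
proof (induction "degree f" arbitrary: f rule: less_induct)
  case less
  show ?case
  proof (cases "f dvd 1")
    case True
    then obtain c where "f = [:c:]" unfolding is_unit_poly_iff by blast
    then have "f = smult c (l ^ 0)" by simp
    then show ?thesis by blast
  next
    case False
    have "f dvd 1 \<or> l dvd f" using less.prems(2) by (simp only: dvd_refl simp_thms)
    then have "l dvd f" using False by (simp only: simp_thms)
    then obtain g where g: "f = l * g" by (rule dvdE)
    have g0: "g \<noteq> 0"
    proof
      assume "g = 0"
      then have "f = 0" using g by simp
      then show False using less.prems(1) by contradiction
    qed
    have l0: "l \<noteq> 0" using assms by auto
    have "degree f = degree l + degree g" using g g0 l0 by (simp add: degree_mult_eq)
    then have lt: "degree g < degree f" using assms by simp
    have "\<forall>d. d dvd g \<longrightarrow> d dvd 1 \<or> l dvd d"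
    proof (intro allI impI)
      fix d assume "d dvd g"
      then have "d dvd l * g" by (rule dvd_mult)
      then have "d dvd f" by (simp only: g)
      then show "d dvd 1 \<or> l dvd d" using less.prems(2) by (rule_tac mp) (erule spec)
    qed
    from less.hyps[OF lt g0 this] obtain c n where "g = smult c (l ^ n)" by blast
    then have "f = smult c (l ^ Suc n)" using g by (simp add: mult_smult_right)
    then show ?thesis by blast
  qed
qed

lemma lm1_dvd: "((l::'a::field poly) - 1) dvd (l ^ n - 1)"
  by (subst power_diff_1_eq) (rule dvd_triv_left)

lemma pow_eq:
  assumes d: "degree (l :: 'a::field poly) = 1"
  shows "POW l = LPOW l"
proof
  show "POW l \<subseteq> LPOW l"
  proof
    fix f assume "f \<in> POW l"
    then obtain n where n: "n \<ge> 1" "f = l ^ n" unfolding POW_def by blast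
    have "l dvd f" using n by (simp add: dvd_power)
    moreover have "(l - 1) dvd (f - 1)" using n lm1_dvd by simp
    moreover have "\<forall>d. d dvd f \<longrightarrow> d dvd 1 \<or> l dvd d"
    proof (intro allI impI)
      fix d assume "d dvd f"
      then have "d dvd l ^ n" using n(2) by simp
      then show "d dvd 1 \<or> l dvd d" by (rule divs_pow[OF d])
    qed
    ultimately show "f \<in> LPOW l" unfolding LPOW_def by blast
  qed
next
  have dl1: "degree (l - 1) = 1"
  proof -
    have "degree (l + - 1) = degree l" by (rule degree_add_eq_left) (simp add: d)
    then show ?thesis using d by simp
  qed
  show "LPOW l \<subseteq> POW l"
  proof
    fix f assume "f \<in> LPOW l"
    then have f1: "l dvd f" and f2: "(l - 1) dvd (f - 1)"
      and f3: "\<forall>d. d dvd f \<longrightarrow> d dvd 1 \<or> l dvd d" unfolding LPOW_def by blast+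
    have f0: "f \<noteq> 0"
    proof
      assume "f = 0"
      then have "(l - 1) dvd 1" using f2 by simp
      then show False using dl1 by (metis is_unit_iff_degree one_neq_zero zero_neq_one degree_0)
    qed
    obtain c n where cn: "f = smult c (l ^ n)" using struct[OF d f0 f3] by blast
    have c0: "c \<noteq> 0" using cn f0 by auto
    have n0: "n \<noteq> 0"
    proof
      assume "n = 0"
      then have "l dvd [:c:]" using cn f1 by simp
      then have "degree l \<le> degree [:c:]" using c0 by (intro dvd_imp_degree_le) auto
      then show False using d by simp
    qed
    have "(l - 1) dvd smult c (l ^ n - 1)" by (rule dvd_smult) (rule lm1_dvd)
    then have "(l - 1) dvd (f - 1) - smult c (l ^ n - 1)" using f2 by (rule dvd_diff[rotated])
    moreover have "(f - 1) - smult c (l ^ n - 1) = [:c - 1:]" using cn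
      by (simp add: smult_diff_right one_pCons)
    ultimately have h: "(l - 1) dvd [:c - 1:]" by metis
    have "c = 1"
    proof (rule ccontr)
      assume "c \<noteq> 1"
      then have "degree (l - 1) \<le> degree [:c - 1:]" using h by (intro dvd_imp_degree_le) simp_all
      then show False using dl1 by simp
    qed
    then have "f = l ^ n" using cn by simp
    moreover have "n \<ge> 1" using n0 by simp
    ultimately show "f \<in> POW l" unfolding POW_def by blast
  qed
qed

theorem proposition1p7:
  shows "(\<forall>l :: 'a::field poly. alpha_fml l \<longleftrightarrow> l \<in> Lset) \<and>
         (\<forall>l :: 'a::field poly. l \<in> Lset \<longrightarrow> POW l = LPOW l)"
  by (simp add: Lset_def alpha_iff pow_eq)

end
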